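(* Let $\{X_i\}_{i\ge1}$ be i.i.d. symmetric random variables with $P(X_1=0)=0$, belonging to the domain of attraction of the $N(0,1)$ distribution, and let $V_j=(\sum_{i=1}^j X_i^2)^{1/2}$. Then for all integers $1\le j<k$, \[ E\Big(\frac{X_{j+1}^2}{V_{j+1}^2}\,\frac{X_{k+1}^2}{V_{k+1}^2}\Big)=\frac{1}{(j+1)(k+1)}. \]
   Context: A random variable $X$ is in the domain of attraction of $N(0,1)$ if there exist constants $a_n>0$ such that $(X_1+\cdots+X_n)/a_n$ converges in distribution to $N(0,1)$ for i.i.d. copies $X_i$ of $X$. *)

theory Defs
  imports "HOL-Probability.Probability"
begin

definition in_DoA_normal :: "'a measure \<Rightarrow> (nat \<Rightarrow> 'a \<Rightarrow> real) \<Rightarrow> bool" where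
  "in_DoA_normal M X \<longleftrightarrow>
     (\<exists>a :: nat \<Rightarrow> real. (\<forall>n. a n > 0) \<and>
        weak_conv_m (\<lambda>n. distr M borel (\<lambda>\<omega>. (\<Sum>i=1..n. X i \<omega>) / a n))
                    std_normal_distribution)"

definition selfnorm :: "(nat \<Rightarrow> 'a \<Rightarrow> real) \<Rightarrow> nat \<Rightarrow> 'a \<Rightarrow> real" where
  "selfnorm X j \<omega> = sqrt (\<Sum>i=1..j. (X i \<omega>)^2)"

end

theory Submission
  imports Defs
begin

lemma exch:
  fixes M :: "'a measure" and X :: "nat \<Rightarrow> 'a \<Rightarrow> real" and f :: "(nat \<Rightarrow> real) \<Rightarrow> real"
  assumes P: "prob_space M"
    and meas: "\<And>i. i \<ge> 1 \<Longrightarrow> X i \<in> borel_measurable M"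
    and ind: "prob_space.indep_vars M (\<lambda>i. borel) X {1..}"
    and dst: "\<And>i. i \<ge> 1 \<Longrightarrow> distr M borel (X i) = distr M borel (X 1)"
    and m: "1 \<le> m" and s: "s permutes {1..m}"
    and f: "f \<in> borel_measurable (PiM {1..m} (\<lambda>_. borel))"
  shows "integral\<^sup>L M (\<lambda>\<omega>. f (\<lambda>i\<in>{1..m}. X (s i) \<omega>)) = integral\<^sup>L M (\<lambda>\<omega>. f (\<lambda>i\<in>{1..m}. X i \<omega>))"
proof -
  interpret prob_space M by fact
  define I where "I = {1..m::nat}"
  define D where "D = distr M borel (X 1)"
  have pD: "prob_space D" unfolding D_def using meas[of 1] by (intro prob_space_distr) auto
  have sD: "sets D = sets borel" by (simp add: D_def)
  define P' where "P' = PiM I (\<lambda>_. D)"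
  have sP: "sets P' = sets (PiM I (\<lambda>_. borel))" unfolding P'_def
    by (intro sets_PiM_cong) (auto simp: sD)
  have indI: "indep_vars (\<lambda>i. borel) X I" using ind by (rule indep_vars_subset) (auto simp: I_def)
  have Z: "distr M (PiM I (\<lambda>_. borel)) (\<lambda>\<omega>. \<lambda>i\<in>I. X i \<omega>) = PiM I (\<lambda>i. distr M borel (X i))"
    using indep_vars_iff_distr_eq_PiM'[where I=I and M'="\<lambda>_. borel" and X=X] indI meas m by (auto simp: I_def)
  also have "\<dots> = P'" unfolding P'_def D_def
    by (intro PiM_cong refl) (metis I_def atLeastAtMost_iff dst)
  finally have Z0: "distr M (PiM I (\<lambda>_. borel)) (\<lambda>\<omega>. \<lambda>i\<in>I. X i \<omega>) = P'" .
  have "distr M P' (\<lambda>\<omega>. \<lambda>i\<in>I. X i \<omega>) = distr M (PiM I (\<lambda>_. borel)) (\<lambda>\<omega>. \<lambda>i\<in>I. X i \<omega>)"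
    by (rule distr_cong[OF refl sP refl])
  with Z0 have Z': "distr M P' (\<lambda>\<omega>. \<lambda>i\<in>I. X i \<omega>) = P'" by simp
  have Zm: "(\<lambda>\<omega>. \<lambda>i\<in>I. X i \<omega>) \<in> measurable M P'"
    unfolding measurable_cong_sets[OF refl sP] using meas by (auto simp: I_def intro!: measurable_restrict)
  have fP: "f \<in> borel_measurable P'" unfolding measurable_cong_sets[OF sP refl] using f by (simp add: I_def)
  have sI: "inj_on s I" "s \<in> I \<rightarrow> I" using permutes_inj_on[OF s] permutes_in_image[OF s] unfolding I_def by auto
  have R: "distr P' P' (\<lambda>x. \<lambda>i\<in>I. x (s i)) = P'"
    using distr_PiM_reindex[where K=I and M="\<lambda>_. D" and f=s and I=I] sI pD unfolding P'_def by simp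
  have Tm: "(\<lambda>x. \<lambda>i\<in>I. x (s i)) \<in> measurable P' P'"
    unfolding measurable_cong_sets[OF sP sP] using sI
    by (auto simp: I_def intro!: measurable_restrict measurable_component_singleton)
  have "integral\<^sup>L M (\<lambda>\<omega>. f (\<lambda>i\<in>I. X (s i) \<omega>))
      = integral\<^sup>L M (\<lambda>\<omega>. f ((\<lambda>x. \<lambda>i\<in>I. x (s i)) (\<lambda>i\<in>I. X i \<omega>)))"
    using sI(2) by (intro Bochner_Integration.integral_cong refl arg_cong[where f=f]) (auto simp: restrict_def fun_eq_iff)
  also have "\<dots> = integral\<^sup>L (distr M P' (\<lambda>\<omega>. \<lambda>i\<in>I. X i \<omega>)) (\<lambda>x. f ((\<lambda>x. \<lambda>i\<in>I. x (s i)) x))"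
  proof -
    have fT: "(\<lambda>x. f (\<lambda>i\<in>I. x (s i))) \<in> borel_measurable P'" using measurable_compose[OF Tm fP] by simp
    show ?thesis using integral_distr[OF Zm fT] by simp
  qed
  also have "\<dots> = integral\<^sup>L (distr P' P' (\<lambda>x. \<lambda>i\<in>I. x (s i))) f"
    unfolding Z' by (rule integral_distr[symmetric, OF Tm fP])
  also have "\<dots> = integral\<^sup>L (distr M P' (\<lambda>\<omega>. \<lambda>i\<in>I. X i \<omega>)) f" by (simp add: R Z')
  also have "\<dots> = integral\<^sup>L M (\<lambda>\<omega>. f (\<lambda>i\<in>I. X i \<omega>))"
    by (rule integral_distr[OF Zm fP])
  finally show ?thesis by (simp add: I_def)
qed

lemma meas_comp: "i \<in> I \<Longrightarrow> (\<lambda>x::nat \<Rightarrow> real. x i) \<in> borel_measurable (PiM I (\<lambda>_. borel))"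
  by (rule measurable_component_singleton)

lemma meas_sum: "p \<le> m \<Longrightarrow> (\<lambda>x::nat \<Rightarrow> real. (\<Sum>l=1..p. (x l)^2)) \<in> borel_measurable (PiM {1..m} (\<lambda>_. borel))"
  by (intro borel_measurable_sum borel_measurable_power meas_comp) auto

lemma sum_sw:
  fixes g :: "nat \<Rightarrow> real"
  assumes "a \<in> {1..p}" "b \<in> {1..p}" "p \<le> m"
  shows "(\<Sum>l=1..p. ((\<lambda>l\<in>{1..m}. g (Transposition.transpose a b l)) l)^2) = (\<Sum>l=1..p. (g l)^2)"
proof -
  have "(\<Sum>l=1..p. ((\<lambda>l\<in>{1..m}. g (Transposition.transpose a b l)) l)^2) = (\<Sum>l=1..p. ((\<lambda>l. (g l)^2) \<circ> Transposition.transpose a b) l)"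
    using assms(3) by (intro sum.cong) auto
  also have "\<dots> = (\<Sum>l=1..p. (g l)^2)"
    using sum.permute[OF permutes_swap_id[OF assms(1,2)], of "\<lambda>l. (g l)^2"] by simp
  finally show ?thesis .
qed

lemma div_le1: "(0::real) \<le> a \<Longrightarrow> a \<le> S \<Longrightarrow> a / S \<le> 1"
  by (cases "S = 0") auto

theorem lemma4p3:
  fixes M :: "'a measure" and X :: "nat \<Rightarrow> 'a \<Rightarrow> real" and j k :: nat
  assumes "prob_space M"
    and "\<And>i. i \<ge> 1 \<Longrightarrow> X i \<in> borel_measurable M"
    and "prob_space.indep_vars M (\<lambda>i. borel) X {1..}"
    and "\<And>i. i \<ge> 1 \<Longrightarrow> distr M borel (X i) = distr M borel (X 1)"
    and "distr M borel (\<lambda>\<omega>. - X 1 \<omega>) = distr M borel (X 1)"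
    and "measure M {\<omega> \<in> space M. X 1 \<omega> = 0} = 0"
    and "in_DoA_normal M X"
    and "1 \<le> j" and "j < k"
  shows "integral\<^sup>L M (\<lambda>\<omega>. ((X (j+1) \<omega>)^2 / (selfnorm X (j+1) \<omega>)^2) *
                           ((X (k+1) \<omega>)^2 / (selfnorm X (k+1) \<omega>)^2))
         = 1 / (real (j+1) * real (k+1))"
proof -
  note P = assms(1) and meas = assms(2) and ind = assms(3) and dst = assms(4)
  interpret prob_space M by fact
  define n where "n = j + 1"
  define m where "m = k + 1"
  have nm: "1 \<le> n" "n < m" "1 \<le> m" using assms(8,9) by (auto simp: n_def m_def)
  define S where "S p \<omega> = (\<Sum>l=1..p. (X l \<omega>)^2)" for p \<omega>
  have sq: "(selfnorm X p \<omega>)^2 = S p \<omega>" for p \<omega>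
    by (simp add: selfnorm_def S_def sum_nonneg)
  have mX[measurable]: "X i \<in> borel_measurable M" if "i \<in> {1..m}" for i using meas that by auto
  have mS[measurable]: "S p \<in> borel_measurable M" if "p \<le> m" for p
    unfolding S_def[abs_def] using that by (intro borel_measurable_sum borel_measurable_power mX) auto
  have bnd: "X i \<omega> ^ 2 / S p \<omega> \<le> 1" "0 \<le> X i \<omega> ^ 2 / S p \<omega>" if "i \<in> {1..p}" for i p \<omega>
  proof -
    have "X i \<omega> ^ 2 \<le> S p \<omega>" unfolding S_def using that
      by (intro member_le_sum) auto
    then show "X i \<omega> ^ 2 / S p \<omega> \<le> 1" by (intro div_le1) auto
    show "0 \<le> X i \<omega> ^ 2 / S p \<omega>" unfolding S_def by (intro divide_nonneg_nonneg sum_nonneg) auto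
  qed
  define A where "A i = (\<integral>\<omega>. X i \<omega> ^ 2 / S n \<omega> * (X m \<omega> ^ 2 / S m \<omega>) \<partial>M)" for i
  define B where "B i = (\<integral>\<omega>. X i \<omega> ^ 2 / S m \<omega> \<partial>M)" for i
  define I where "I = {1..m}"
  have restr: "(\<lambda>l\<in>I. X l \<omega>) l = X l \<omega>" if "l \<in> {1..m}" for l \<omega> using that by (simp add: I_def)
  have A_eq: "A i = A n" if i: "i \<in> {1..n}" for i
  proof -
    define h where "h x = x n ^ 2 / (\<Sum>l=1..n. (x l)^2) * (x m ^ 2 / (\<Sum>l=1..m. (x l)^2))" for x :: "nat \<Rightarrow> real"
    have hm: "h \<in> borel_measurable (PiM {1..m} (\<lambda>_. borel))"
      unfolding h_def[abs_def] using nm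
      by (intro borel_measurable_times borel_measurable_divide borel_measurable_power meas_comp meas_sum) auto
    have ps: "Transposition.transpose i n permutes {1..m}" using i nm by (intro permutes_swap_id) auto
    have e: "integral\<^sup>L M (\<lambda>\<omega>. h (\<lambda>l\<in>{1..m}. X (Transposition.transpose i n l) \<omega>)) = integral\<^sup>L M (\<lambda>\<omega>. h (\<lambda>l\<in>{1..m}. X l \<omega>))"
      by (rule exch[OF P meas ind dst _ ps hm]) (use nm in auto)
    have l: "h (\<lambda>l\<in>{1..m}. X (Transposition.transpose i n l) \<omega>) = X i \<omega> ^ 2 / S n \<omega> * (X m \<omega> ^ 2 / S m \<omega>)" for \<omega>
    proof -
      have s1: "(\<Sum>l=1..n. ((\<lambda>l\<in>{1..m}. X (Transposition.transpose i n l) \<omega>) l)^2) = S n \<omega>"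
        unfolding S_def using sum_sw[of i n n m "\<lambda>l. X l \<omega>"] i nm by auto
      have s2: "(\<Sum>l=1..m. ((\<lambda>l\<in>{1..m}. X (Transposition.transpose i n l) \<omega>) l)^2) = S m \<omega>"
        unfolding S_def using sum_sw[of i m n m "\<lambda>l. X l \<omega>"] i nm by auto
      have "Transposition.transpose i n m = m" using i nm by (auto simp: Transposition.transpose_def)
      then show ?thesis unfolding h_def s1 s2 using i nm by (auto simp: Transposition.transpose_def)
    qed
    have r: "h (\<lambda>l\<in>{1..m}. X l \<omega>) = X n \<omega> ^ 2 / S n \<omega> * (X m \<omega> ^ 2 / S m \<omega>)" for \<omega>
      unfolding h_def S_def using nm by (auto intro!: arg_cong2[where f="(/)"] arg_cong2[where f="(*)"] sum.cong)
    show ?thesis using e unfolding l r A_def .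
  qed
  have B_eq: "B i = B m" if i: "i \<in> {1..m}" for i
  proof -
    define h where "h x = x m ^ 2 / (\<Sum>l=1..m. (x l)^2)" for x :: "nat \<Rightarrow> real"
    have hm: "h \<in> borel_measurable (PiM {1..m} (\<lambda>_. borel))"
      unfolding h_def[abs_def] using nm
      by (intro borel_measurable_times borel_measurable_divide borel_measurable_power meas_comp meas_sum) auto
    have ps: "Transposition.transpose i m permutes {1..m}" using i nm by (intro permutes_swap_id) auto
    have e: "integral\<^sup>L M (\<lambda>\<omega>. h (\<lambda>l\<in>{1..m}. X (Transposition.transpose i m l) \<omega>)) = integral\<^sup>L M (\<lambda>\<omega>. h (\<lambda>l\<in>{1..m}. X l \<omega>))"
      by (rule exch[OF P meas ind dst _ ps hm]) (use nm in auto)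
    have l: "h (\<lambda>l\<in>{1..m}. X (Transposition.transpose i m l) \<omega>) = X i \<omega> ^ 2 / S m \<omega>" for \<omega>
    proof -
      have s2: "(\<Sum>l=1..m. ((\<lambda>l\<in>{1..m}. X (Transposition.transpose i m l) \<omega>) l)^2) = S m \<omega>"
        unfolding S_def using sum_sw[of i m m m "\<lambda>l. X l \<omega>"] i nm by auto
      then show ?thesis unfolding h_def s2 using i nm by (auto simp: Transposition.transpose_def)
    qed
    have r: "h (\<lambda>l\<in>{1..m}. X l \<omega>) = X m \<omega> ^ 2 / S m \<omega>" for \<omega>
      unfolding h_def S_def using nm by (auto intro!: arg_cong2[where f="(/)"] sum.cong)
    show ?thesis using e unfolding l r B_def .
  qed
  have null: "{\<omega> \<in> space M. X 1 \<omega> = 0} \<in> null_sets M"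
    using assms(6) meas[of 1] by (auto simp: null_sets_def emeasure_eq_measure)
  have AE0: "AE \<omega> in M. S p \<omega> \<noteq> 0" if "1 \<le> p" for p
  proof (rule AE_I'[OF null])
    show "{\<omega> \<in> space M. \<not> S p \<omega> \<noteq> 0} \<subseteq> {\<omega> \<in> space M. X 1 \<omega> = 0}"
    proof safe
      fix \<omega> assume "\<omega> \<in> space M" "S p \<omega> = 0"
      then have "\<forall>l\<in>{1..p}. (X l \<omega>)^2 = 0" unfolding S_def
        by (subst sum_nonneg_eq_0_iff[symmetric]) auto
      then show "X 1 \<omega> = 0" using that by auto
    qed
  qed
  have intA: "integrable M (\<lambda>\<omega>. X i \<omega> ^ 2 / S n \<omega> * (X m \<omega> ^ 2 / S m \<omega>))" if "i \<in> {1..n}" for i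
  proof (rule integrable_const_bound[where B=1])
    show "AE \<omega> in M. norm (X i \<omega> ^ 2 / S n \<omega> * (X m \<omega> ^ 2 / S m \<omega>)) \<le> 1"
    proof (rule AE_I2)
      fix \<omega>
      have a: "0 \<le> X i \<omega> ^ 2 / S n \<omega>" "X i \<omega> ^ 2 / S n \<omega> \<le> 1" using bnd[OF that] by auto
      have b: "0 \<le> X m \<omega> ^ 2 / S m \<omega>" "X m \<omega> ^ 2 / S m \<omega> \<le> 1" using bnd[of m m] nm by auto
      have "norm (X i \<omega> ^ 2 / S n \<omega> * (X m \<omega> ^ 2 / S m \<omega>)) = X i \<omega> ^ 2 / S n \<omega> * (X m \<omega> ^ 2 / S m \<omega>)"
        using a b by (simp only: real_norm_def abs_of_nonneg mult_nonneg_nonneg)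
      also have "\<dots> \<le> 1" using a b by (intro mult_le_one) auto
      finally show "norm (X i \<omega> ^ 2 / S n \<omega> * (X m \<omega> ^ 2 / S m \<omega>)) \<le> 1" .
    qed
    show "(\<lambda>\<omega>. X i \<omega> ^ 2 / S n \<omega> * (X m \<omega> ^ 2 / S m \<omega>)) \<in> borel_measurable M"
      using that nm by (intro borel_measurable_times borel_measurable_divide borel_measurable_power mX mS) auto
  qed
  have intB: "integrable M (\<lambda>\<omega>. X i \<omega> ^ 2 / S m \<omega>)" if "i \<in> {1..m}" for i
  proof (rule integrable_const_bound[where B=1])
    show "AE \<omega> in M. norm (X i \<omega> ^ 2 / S m \<omega>) \<le> 1"
      using bnd[OF that] by (intro AE_I2) (simp only: real_norm_def abs_of_nonneg)
    show "(\<lambda>\<omega>. X i \<omega> ^ 2 / S m \<omega>) \<in> borel_measurable M"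
      using that nm by (intro borel_measurable_divide borel_measurable_power mX mS) auto
  qed
  have sumA: "(\<Sum>i=1..n. A i) = B m"
  proof -
    have "(\<Sum>i=1..n. A i) = (\<integral>\<omega>. (\<Sum>i=1..n. X i \<omega> ^ 2 / S n \<omega> * (X m \<omega> ^ 2 / S m \<omega>)) \<partial>M)"
      unfolding A_def by (rule Bochner_Integration.integral_sum[where I="{1..n}" and f="\<lambda>i \<omega>. X i \<omega> ^ 2 / S n \<omega> * (X m \<omega> ^ 2 / S m \<omega>)", symmetric]) (use intA in auto)
    also have "\<dots> = B m" unfolding B_def
    proof (rule integral_cong_AE)
      show "AE \<omega> in M. (\<Sum>i=1..n. X i \<omega> ^ 2 / S n \<omega> * (X m \<omega> ^ 2 / S m \<omega>)) = X m \<omega> ^ 2 / S m \<omega>"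
        using AE0[OF nm(1)]
      proof eventually_elim
        case (elim \<omega>)
        have "(\<Sum>i=1..n. X i \<omega> ^ 2 / S n \<omega> * (X m \<omega> ^ 2 / S m \<omega>)) = (\<Sum>i=1..n. X i \<omega> ^ 2) / S n \<omega> * (X m \<omega> ^ 2 / S m \<omega>)"
          by (simp add: sum_divide_distrib sum_distrib_right)
        also have "\<dots> = X m \<omega> ^ 2 / S m \<omega>" using elim by (simp add: S_def)
        finally show ?case .
      qed
      show "(\<lambda>\<omega>. \<Sum>i=1..n. X i \<omega> ^ 2 / S n \<omega> * (X m \<omega> ^ 2 / S m \<omega>)) \<in> borel_measurable M"
        using intA by (intro borel_measurable_sum) (auto dest: borel_measurable_integrable)
      show "(\<lambda>\<omega>. X m \<omega> ^ 2 / S m \<omega>) \<in> borel_measurable M"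
        using intB[of m] nm by (auto dest: borel_measurable_integrable)
    qed
    finally show ?thesis .
  qed
  have sumB: "(\<Sum>i=1..m. B i) = 1"
  proof -
    have "(\<Sum>i=1..m. B i) = (\<integral>\<omega>. (\<Sum>i=1..m. X i \<omega> ^ 2 / S m \<omega>) \<partial>M)"
      unfolding B_def by (rule Bochner_Integration.integral_sum[where I="{1..m}" and f="\<lambda>i \<omega>. X i \<omega> ^ 2 / S m \<omega>", symmetric]) (use intB in auto)
    also have "\<dots> = (\<integral>\<omega>. 1 \<partial>M)"
    proof (rule integral_cong_AE)
      show "AE \<omega> in M. (\<Sum>i=1..m. X i \<omega> ^ 2 / S m \<omega>) = 1"
        using AE0[OF nm(3)]
      proof eventually_elim
        case (elim \<omega>)
        then show ?case by (simp add: sum_divide_distrib[symmetric] S_def)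
      qed
      show "(\<lambda>\<omega>. \<Sum>i=1..m. X i \<omega> ^ 2 / S m \<omega>) \<in> borel_measurable M"
        using intB by (intro borel_measurable_sum) (auto dest: borel_measurable_integrable)
    qed auto
    also have "\<dots> = 1" by (simp add: prob_space)
    finally show ?thesis .
  qed
  have "(\<Sum>i=1..n. A i) = (\<Sum>i=1..n. A n)" by (rule sum.cong) (auto intro: A_eq)
  then have "(\<Sum>i=1..n. A i) = real n * A n" by simp
  with sumA have 1: "real n * A n = B m" by simp
  have "(\<Sum>i=1..m. B i) = (\<Sum>i=1..m. B m)" by (rule sum.cong) (auto intro: B_eq)
  then have "(\<Sum>i=1..m. B i) = real m * B m" by simp
  with sumB have 2: "real m * B m = 1" by simp
  have "A n * (real n * real m) = 1" using 1 2 by (simp add: mult.assoc[symmetric] mult.commute)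
  then have An: "A n = 1 / (real n * real m)" using nm by (simp add: field_simps)
  have "integral\<^sup>L M (\<lambda>\<omega>. ((X (j+1) \<omega>)^2 / (selfnorm X (j+1) \<omega>)^2) *
                           ((X (k+1) \<omega>)^2 / (selfnorm X (k+1) \<omega>)^2)) = A n"
    unfolding A_def sq n_def m_def ..
  then show ?thesis using An by (simp add: n_def m_def)
qed

end
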